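(* Let $R$ be a supertropical semiring such that $eR$ is a semifield with $\mathcal G\neq\{e\}$, let $(q,b)$ be a quadratic pair on an $R$-module $V$, and let $x,y\in V\setminus\{0\}$. Suppose either that $(x,y)$ is weakly CS, or that $(x,y)$ is almost CS and both $q(x)$ and $q(y)$ lie in $eR$. Then $q(\lambda x+\mu y)=q(\lambda x)+q(\mu y)$ for all $\lambda,\mu\in R$ (equivalently, $q$ is additive on $Rx+Ry$).
   Context: All semirings are commutative with $1$. A semiring $R$ is supertropical if $e:=1+1$ satisfies $e+e=e$ and, for all $x,y\in R$: if $ex\neq ey$ then $x+y\in\{x,y\}$, and if $ex=ey$ then $x+y=ey$. $eR$ is totally ordered by $u\le v\iff u+v=v$; write $x\le_\nu y$, $x\cong_\nu y$, $x<_\nu y$ for $ex\le ey$, $ex=ey$, $ex<ey$. $\mathcal G=eR\setminus\{0\}$; "$eR$ is a semifield" means every element of $\mathcal G$ is invertible in the semiring $eR$ (whose unit is $e$). A quadratic form on an $R$-module $V$ is a map $q:V\to R$ with $q(ax)=a^2q(x)$ such that some symmetric bilinear $b$ satisfies $q(x+y)=q(x)+q(y)+b(x,y)$; $(q,b)$ is then a quadratic pair. A pair $(x,y)$ of nonzero vectors is weakly CS if $b(x,y)^2\le_\nu q(x)q(y)$, and almost CS if $b(x,y)^2\le_\nu c\,q(x)q(y)$ for every $c\in\mathcal G$ with $c>e$. *)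

theory Defs
  imports Main
begin

definition ee :: "'a::comm_semiring_1" where
  "ee = 1 + 1"

definition supertropical :: "'a::comm_semiring_1 itself \<Rightarrow> bool" where
  "supertropical _ \<longleftrightarrow>
     (ee + ee = (ee::'a)) \<and>
     (\<forall>x y::'a. (ee * x \<noteq> ee * y \<longrightarrow> x + y \<in> {x, y}) \<and>
                 (ee * x = ee * y \<longrightarrow> x + y = ee * y))"

definition ghost_ideal :: "'a::comm_semiring_1 set" where
  "ghost_ideal = range (\<lambda>x. ee * x)"

definition ghostG :: "'a::comm_semiring_1 set" where
  "ghostG = ghost_ideal - {0}"

definition e_le :: "'a::comm_semiring_1 \<Rightarrow> 'a \<Rightarrow> bool" where
  "e_le u v \<longleftrightarrow> u + v = v"

definition e_less :: "'a::comm_semiring_1 \<Rightarrow> 'a \<Rightarrow> bool" where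
  "e_less u v \<longleftrightarrow> e_le u v \<and> u \<noteq> v"

definition nu_le :: "'a::comm_semiring_1 \<Rightarrow> 'a \<Rightarrow> bool" where
  "nu_le x y \<longleftrightarrow> e_le (ee * x) (ee * y)"

definition eR_semifield :: "'a::comm_semiring_1 itself \<Rightarrow> bool" where
  "eR_semifield _ \<longleftrightarrow>
     (\<forall>g\<in>(ghostG::'a set). \<exists>h\<in>ghost_ideal. g * h = ee)"

definition semimodule :: "('a::comm_semiring_1 \<Rightarrow> 'v::comm_monoid_add \<Rightarrow> 'v) \<Rightarrow> bool" where
  "semimodule smul \<longleftrightarrow>
     (\<forall>a x y. smul a (x + y) = smul a x + smul a y) \<and>
     (\<forall>a b x. smul (a + b) x = smul a x + smul b x) \<and>
     (\<forall>a b x. smul (a * b) x = smul a (smul b x)) \<and>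
     (\<forall>x. smul 1 x = x) \<and>
     (\<forall>x. smul 0 x = 0) \<and>
     (\<forall>a. smul a 0 = 0)"

definition symmetric_bilinear ::
  "('a::comm_semiring_1 \<Rightarrow> 'v::comm_monoid_add \<Rightarrow> 'v) \<Rightarrow> ('v \<Rightarrow> 'v \<Rightarrow> 'a) \<Rightarrow> bool" where
  "symmetric_bilinear smul b \<longleftrightarrow>
     (\<forall>x y. b x y = b y x) \<and>
     (\<forall>x y z. b (x + y) z = b x z + b y z) \<and>
     (\<forall>a x y. b (smul a x) y = a * b x y)"

definition quadratic_pair ::
  "('a::comm_semiring_1 \<Rightarrow> 'v::comm_monoid_add \<Rightarrow> 'v) \<Rightarrow> ('v \<Rightarrow> 'a) \<Rightarrow> ('v \<Rightarrow> 'v \<Rightarrow> 'a) \<Rightarrow> bool" where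
  "quadratic_pair smul q b \<longleftrightarrow>
     (\<forall>a x. q (smul a x) = a^2 * q x) \<and>
     symmetric_bilinear smul b \<and>
     (\<forall>x y. q (x + y) = q x + q y + b x y)"

definition weakly_CS :: "('v::comm_monoid_add \<Rightarrow> 'a::comm_semiring_1) \<Rightarrow> ('v \<Rightarrow> 'v \<Rightarrow> 'a) \<Rightarrow> 'v \<Rightarrow> 'v \<Rightarrow> bool" where
  "weakly_CS q b x y \<longleftrightarrow> x \<noteq> 0 \<and> y \<noteq> 0 \<and> nu_le ((b x y)^2) (q x * q y)"

definition almost_CS :: "('v::comm_monoid_add \<Rightarrow> 'a::comm_semiring_1) \<Rightarrow> ('v \<Rightarrow> 'v \<Rightarrow> 'a) \<Rightarrow> 'v \<Rightarrow> 'v \<Rightarrow> bool" where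
  "almost_CS q b x y \<longleftrightarrow> x \<noteq> 0 \<and> y \<noteq> 0 \<and>
     (\<forall>c\<in>ghostG. e_less ee c \<longrightarrow> nu_le ((b x y)^2) (c * (q x * q y)))"

end

theory Submission
  imports Defs
begin

lemma ee_mult_ee: "(ee::'a::comm_semiring_1) * ee = ee + ee"
  by (metis distrib_left mult_1_right ee_def)

lemma self_add: "(x::'a::comm_semiring_1) + x = ee * x"
  unfolding ee_def by (metis distrib_right mult_1)

lemma le_trans: "e_le (u::'a::comm_semiring_1) v \<Longrightarrow> e_le v w \<Longrightarrow> e_le u w"
  unfolding e_le_def by (metis add.assoc)

lemma le_antisym: "e_le (u::'a::comm_semiring_1) v \<Longrightarrow> e_le v u \<Longrightarrow> u = v"
  unfolding e_le_def by (metis add.commute)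

lemma le_mono: "e_le (u::'a::comm_semiring_1) v \<Longrightarrow> e_le (c*u) (c*v)"
  unfolding e_le_def by (metis distrib_left)

lemma le_zero: "e_le (u::'a::comm_semiring_1) 0 \<Longrightarrow> u = 0"
  unfolding e_le_def by simp

lemma le_refl_gh: "ee * (u::'a::comm_semiring_1) = u \<Longrightarrow> e_le u u"
  unfolding e_le_def using self_add[of u] by simp


context
  fixes T :: "'a::comm_semiring_1 itself"
  assumes ST: "supertropical TYPE('a)"
begin

lemma EE: "(ee::'a) * ee = ee"
  using ST ee_mult_ee[where 'a='a] by (simp add: supertropical_def)

lemma st1: "ee * (x::'a) \<noteq> ee * y \<Longrightarrow> x + y = x \<or> x + y = y"
  using ST by (auto simp: supertropical_def)

lemma st2: "ee * (x::'a) = ee * y \<Longrightarrow> x + y = ee * y"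
  using ST by (auto simp: supertropical_def)

lemma gh_E: "ee * (ee * (x::'a)) = ee * x"
  by (simp add: mult.assoc[symmetric] EE)

lemma le_total: "ee * (u::'a) = u \<Longrightarrow> ee * v = v \<Longrightarrow> e_le u v \<or> e_le v u"
  unfolding e_le_def
proof -
  assume u: "ee * u = u" and v: "ee * v = v"
  show "u + v = v \<or> v + u = u"
  proof (cases "u = v")
    case True then show ?thesis using u self_add[of u] by simp
  next
    case False
    then have "ee * u \<noteq> ee * v" using u v by simp
    from st1[OF this] show ?thesis by (auto simp: add.commute)
  qed
qed



lemma final_sum: "e_le (ee*g) (ee*(s::'a)) \<Longrightarrow> (ee*g = ee*s \<Longrightarrow> ee*s = s) \<Longrightarrow> s + g = s"
proof -
  assume le: "e_le (ee*g) (ee*(s::'a))" and gh: "ee*g = ee*s \<Longrightarrow> ee*s = s"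
  show "s + g = s"
  proof (cases "ee*g = ee*s")
    case True
    then have "s + g = ee*g" using st2[of s g] by simp
    then show ?thesis using True gh by simp
  next
    case False
    then have ne: "ee*s \<noteq> ee*g" by simp
    from st1[OF ne] show ?thesis
    proof
      assume "s + g = s" then show ?thesis .
    next
      assume h: "s + g = g"
      have "ee*(s+g) = ee*s + ee*g" by (simp add: distrib_left)
      also have "\<dots> = ee*s" using le unfolding e_le_def by (simp add: add.commute)
      finally have "ee*g = ee*s" using h by simp
      with False show ?thesis by simp
    qed
  qed
qed

lemma all_zero: "ee = (0::'a) \<Longrightarrow> (x::'a) = 0"
proof -
  assume z: "ee = (0::'a)"
  have "x + 0 = ee * 0" by (rule st2) (simp add: z)
  then show ?thesis by simp
qed

context
  assumes SF: "eR_semifield TYPE('a)"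
begin

lemma inv_ex: "ee * (u::'a) = u \<Longrightarrow> u \<noteq> 0 \<Longrightarrow> \<exists>h. ee * h = h \<and> u * h = ee"
proof -
  assume u: "ee * (u::'a) = u" and nz: "u \<noteq> 0"
  have "u \<in> ghostG" unfolding ghostG_def ghost_ideal_def using u nz by (metis DiffI rangeI singletonD)
  then obtain h where "h \<in> ghost_ideal" "u * h = ee" using SF unfolding eR_semifield_def by blast
  then obtain t where t: "h = ee * t" "u * h = ee" unfolding ghost_ideal_def by blast
  then have "ee * h = h" using gh_E by simp
  then show ?thesis using t by blast
qed

lemma cancel_le:
  assumes u: "ee * (u::'a) = u" and nz: "u \<noteq> 0" and v: "ee * v = v" and w: "ee*w = w"
    and le: "e_le (u*v) (u*w)"
  shows "e_le v w"
proof -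
  obtain h where h: "ee*h = h" "u*h = ee" using inv_ex[OF u nz] by blast
  have "e_le (h*(u*v)) (h*(u*w))" by (rule le_mono[OF le])
  moreover have "h*(u*v) = (u*h)*v" "h*(u*w) = (u*h)*w" by (simp_all add: algebra_simps)
  ultimately show ?thesis using h v w by simp
qed

lemma sq_zero: "ee * (G::'a) = G \<Longrightarrow> G*G = 0 \<Longrightarrow> G = 0"
proof (rule ccontr)
  assume g: "ee * (G::'a) = G" and z: "G*G = 0" and nz: "G \<noteq> 0"
  obtain h where h: "ee*h = h" "G*h = ee" using inv_ex[OF g nz] by blast
  have "G*G*h = G*(G*h)" by (simp add: algebra_simps)
  also have "\<dots> = G" using h g by (simp add: mult.commute)
  finally show False using z nz by simp
qed

lemma core_weak:
  assumes A: "ee*(A::'a) = A" and B: "ee*B = B" and G: "ee*G = G"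
    and h: "e_le (G*G) (A*B)" and BA: "e_le B A"
  shows "e_le G A \<and> (G = A \<longrightarrow> B = A)"
proof -
  have AA: "e_le (A*B) (A*A)" by (rule le_mono[OF BA])
  have GA: "e_le G A"
  proof (rule ccontr)
    assume n: "\<not> e_le G A"
    then have AG: "e_le A G" and ne: "A \<noteq> G" using le_total[OF G A] le_total[OF A G] le_refl_gh[OF A] by auto
    show False
    proof (cases "A = 0")
      case True
      then have "B = 0" using BA le_zero by simp
      then have "G*G = 0" using h True le_zero by simp
      then have "G = 0" using sq_zero G by simp
      then show False using True ne by simp
    next
      case False
      have "e_le (A*A) (A*G)" by (rule le_mono[OF AG])
      moreover have "e_le (A*G) (G*G)" using le_mono[OF AG, of G] by (simp add: mult.commute)
      ultimately have "e_le (A*G) (A*A)" using h AA le_trans by blast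
      then have "e_le G A" using cancel_le[OF A False G A] by simp
      then show False using n by simp
    qed
  qed
  moreover have "G = A \<longrightarrow> B = A"
  proof
    assume "G = A"
    then have "e_le (A*A) (A*B)" using h by simp
    show "B = A"
    proof (cases "A = 0")
      case True then show ?thesis using BA le_zero by simp
    next
      case False
      then have "e_le A B" using cancel_le[OF A False A B] \<open>e_le (A*A) (A*B)\<close> by simp
      then show ?thesis using BA le_antisym by blast
    qed
  qed
  ultimately show ?thesis by blast
qed

lemma exists_c:
  assumes nz: "ee \<noteq> (0::'a)" and GG: "(ghostG::'a set) \<noteq> {ee}"
  shows "\<exists>c::'a. ee*c = c \<and> c \<noteq> 0 \<and> e_le ee c \<and> ee \<noteq> c"
proof -
  have E: "ee * ee = (ee::'a)" by (rule EE)
  have "ee \<in> (ghostG::'a set)" unfolding ghostG_def ghost_ideal_def using nz by (metis DiffI mult_1_right rangeI singletonD)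
  then obtain g where g: "g \<in> (ghostG::'a set)" "g \<noteq> ee" using GG by blast
  then obtain t where t: "g = ee*t" "g \<noteq> 0" unfolding ghostG_def ghost_ideal_def by blast
  then have gg: "ee * g = g" using gh_E by simp
  show ?thesis
  proof (cases "e_le ee g")
    case True
    have "ee \<noteq> g" using g(2) by metis
    then show ?thesis using gg t True by blast
  next
    case False
    then have ge: "e_le g ee" using le_total[OF E gg] by blast
    obtain h where h: "ee*h = h" "g*h = ee" using inv_ex[OF gg t(2)] by blast
    have hnz: "h \<noteq> 0" using h nz by auto
    have "e_le ee h"
    proof (rule ccontr)
      assume "\<not> e_le ee h"
      then have "e_le h ee" using le_total[OF h(1) E] by blast
      then have "e_le (g*h) (g*ee)" by (rule le_mono)
      then have "e_le ee g" using h gg by (simp add: mult.commute)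
      then show False using False by simp
    qed
    moreover have "ee \<noteq> h"
    proof
      assume "ee = h" then have "g = ee" using h gg by (simp add: mult.commute)
      then show False using g by simp
    qed
    ultimately show ?thesis using h hnz by blast
  qed
qed

lemma core_almost:
  assumes A: "ee*(A::'a) = A" and B: "ee*B = B" and G: "ee*G = G"
    and BA: "e_le B A"
    and h: "\<And>c. ee*c = c \<Longrightarrow> c \<noteq> 0 \<Longrightarrow> e_le ee c \<Longrightarrow> ee \<noteq> c \<Longrightarrow> e_le (G*G) (c*(A*B))"
    and nz: "ee \<noteq> (0::'a)" and GG: "(ghostG::'a set) \<noteq> {ee}"
  shows "e_le G A"
proof (rule ccontr)
  assume n: "\<not> e_le G A"
  then have AG: "e_le A G" and ne: "A \<noteq> G" using le_total[OF G A] le_total[OF A G] le_refl_gh[OF A] by auto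
  have Gnz: "G \<noteq> 0" using AG ne le_zero by auto
  show False
  proof (cases "A = 0")
    case True
    then have "B = 0" using BA le_zero by simp
    obtain c :: 'a where c: "ee*c = c" "c \<noteq> 0" "e_le ee c" "ee \<noteq> c" using exists_c[OF nz GG] by blast
    have "e_le (G*G) 0" using h[OF c] True by simp
    then have "G*G = 0" by (rule le_zero)
    then show False using sq_zero G Gnz by simp
  next
    case False
    obtain k where k: "ee*k = k" "A*k = ee" using inv_ex[OF A False] by blast
    define c where "c = G*k"
    have c1: "ee*c = c" unfolding c_def using G by (metis mult.assoc)
    have c2: "c \<noteq> 0"
    proof
      assume "c = 0"
      then have "G*k*A = 0" unfolding c_def by simp
      moreover have "G*k*A = G" using k G by (metis mult.assoc mult.commute)
      ultimately show False using Gnz by simp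
    qed
    have "e_le (k*A) (k*G)" by (rule le_mono[OF AG])
    then have c3: "e_le ee c" unfolding c_def using k by (simp add: mult.commute)
    have c4: "ee \<noteq> c"
    proof
      assume "ee = c"
      then have "A = G*k*A" using A unfolding c_def by (metis mult.commute)
      also have "G*k*A = G" using k G by (metis mult.assoc mult.commute)
      finally show False using ne by simp
    qed
    have "c*(A*B) = G*B*(A*k)" unfolding c_def by (simp add: algebra_simps)
    also have "\<dots> = G*B" using k B by (metis mult.assoc mult.commute)
    finally have "e_le (G*G) (G*B)" using h[OF c1 c2 c3 c4] by simp
    then have "e_le G B" using cancel_le[OF G Gnz G B] by simp
    then have "e_le G A" using BA le_trans by blast
    then show False using n by simp
  qed
qed

end

end

theorem theorem1p12:
  fixes smul :: "'a::comm_semiring_1 \<Rightarrow> 'v::comm_monoid_add \<Rightarrow> 'v"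
    and q :: "'v \<Rightarrow> 'a" and b :: "'v \<Rightarrow> 'v \<Rightarrow> 'a" and x y :: 'v
  assumes "supertropical TYPE('a)"
    and "eR_semifield TYPE('a)"
    and "(ghostG :: 'a set) \<noteq> {ee}"
    and "semimodule smul"
    and "quadratic_pair smul q b"
    and "x \<noteq> 0" and "y \<noteq> 0"
    and "weakly_CS q b x y \<or>
         (almost_CS q b x y \<and> q x \<in> ghost_ideal \<and> q y \<in> ghost_ideal)"
  shows "\<forall>lam mu. q (smul lam x + smul mu y) = q (smul lam x) + q (smul mu y)"
proof (intro allI)
  fix lam mu
  note ST = assms(1) and SF = assms(2) and GG = assms(3)
  from assms(5) have qs: "\<And>a z. q (smul a z) = a^2 * q z"
    and sym: "\<And>u v. b u v = b v u" and bl: "\<And>a u v. b (smul a u) v = a * b u v"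
    and qadd: "\<And>u v. q (u + v) = q u + q v + b u v"
    unfolding quadratic_pair_def symmetric_bilinear_def by blast+
  define \<alpha> where "\<alpha> = lam^2 * q x"
  define \<beta> where "\<beta> = mu^2 * q y"
  define \<gamma> where "\<gamma> = (lam*mu) * b x y"
  have gam: "b (smul lam x) (smul mu y) = \<gamma>"
    unfolding \<gamma>_def using bl sym by (simp add: mult.assoc mult.left_commute)
  have goal_eq: "q (smul lam x + smul mu y) = (\<alpha> + \<beta>) + \<gamma>"
    "q (smul lam x) + q (smul mu y) = \<alpha> + \<beta>"
    using qadd qs gam unfolding \<alpha>_def \<beta>_def by simp_all
  show "q (smul lam x + smul mu y) = q (smul lam x) + q (smul mu y)"
  proof (cases "ee = (0::'a)")
    case True
    then show ?thesis using all_zero[OF ST] by metis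
  next
    case nz: False
    have E: "ee*ee = (ee::'a)" using EE[OF ST] .
    define A where "A = ee*\<alpha>"
    define B where "B = ee*\<beta>"
    define G where "G = ee*\<gamma>"
    have Ag: "ee*A = A" and Bg: "ee*B = B" and Gg: "ee*G = G"
      unfolding A_def B_def G_def using gh_E[OF ST] by simp_all
    have sA: "ee*(\<alpha>+\<beta>) = A + B" unfolding A_def B_def by (simp add: distrib_left)
    have GG2: "G*G = (lam*mu)^2 * (ee*(b x y)^2)"
    proof -
      have "G*G = (ee*ee)*((lam*mu)^2*(b x y)^2)" unfolding G_def \<gamma>_def
        by (simp add: algebra_simps power2_eq_square)
      then show ?thesis using E by (simp add: algebra_simps)
    qed
    have AB: "A*B = (lam*mu)^2 * (ee*(q x * q y))"
    proof -
      have "A*B = (ee*ee)*((lam*mu)^2*(q x * q y))" unfolding A_def B_def \<alpha>_def \<beta>_def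
        by (simp add: algebra_simps power2_eq_square)
      then show ?thesis using E by (simp add: algebra_simps)
    qed
    from assms(8) show ?thesis
    proof
      assume "weakly_CS q b x y"
      then have "e_le (ee*(b x y)^2) (ee*(q x * q y))" unfolding weakly_CS_def nu_le_def by blast
      then have h: "e_le (G*G) (A*B)" using le_mono GG2 AB by metis
      have h': "e_le (G*G) (B*A)" using h by (simp add: mult.commute)
      from le_total[OF ST Bg Ag] show ?thesis
      proof
        assume BA: "e_le B A"
        have S: "ee*(\<alpha>+\<beta>) = A" using sA BA unfolding e_le_def by (simp add: add.commute)
        from core_weak[OF ST SF Ag Bg Gg h BA] have c: "e_le G A" "G = A \<Longrightarrow> B = A" by blast+
        have "(\<alpha> + \<beta>) + \<gamma> = \<alpha> + \<beta>"
        proof (rule final_sum[OF ST])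
          show "e_le (ee*\<gamma>) (ee*(\<alpha>+\<beta>))" using c S G_def by simp
          assume "ee*\<gamma> = ee*(\<alpha>+\<beta>)"
          then have "B = A" using c S G_def by simp
          then have "\<alpha> + \<beta> = ee*\<beta>" using st2[OF ST, of \<alpha> \<beta>] A_def B_def by simp
          then show "ee*(\<alpha>+\<beta>) = \<alpha>+\<beta>" using gh_E[OF ST] by simp
        qed
        then show ?thesis using goal_eq by simp
      next
        assume BA: "e_le A B"
        have S: "ee*(\<alpha>+\<beta>) = B" using sA BA unfolding e_le_def by (simp add: add.commute)
        from core_weak[OF ST SF Bg Ag Gg h' BA] have c: "e_le G B" "G = B \<Longrightarrow> A = B" by blast+
        have "(\<alpha> + \<beta>) + \<gamma> = \<alpha> + \<beta>"
        proof (rule final_sum[OF ST])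
          show "e_le (ee*\<gamma>) (ee*(\<alpha>+\<beta>))" using c S G_def by simp
          assume "ee*\<gamma> = ee*(\<alpha>+\<beta>)"
          then have "B = A" using c S G_def by simp
          then have "\<alpha> + \<beta> = ee*\<beta>" using st2[OF ST, of \<alpha> \<beta>] A_def B_def by simp
          then show "ee*(\<alpha>+\<beta>) = \<alpha>+\<beta>" using gh_E[OF ST] by simp
        qed
        then show ?thesis using goal_eq by simp
      qed
    next
      assume a: "almost_CS q b x y \<and> q x \<in> ghost_ideal \<and> q y \<in> ghost_ideal"
      then obtain tx ty where tx: "q x = ee*tx" and ty: "q y = ee*ty" unfolding ghost_ideal_def by blast
      have Aa: "A = \<alpha>" unfolding A_def \<alpha>_def tx using gh_E[OF ST, of tx] by (metis mult.left_commute)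
      have Bb: "B = \<beta>" unfolding B_def \<beta>_def ty using gh_E[OF ST, of ty] by (metis mult.left_commute)
      have h: "e_le (G*G) (c*(A*B))" if c: "ee*c = c" "c \<noteq> 0" "e_le ee c" "ee \<noteq> c" for c
      proof -
        have "c \<in> ghostG" unfolding ghostG_def ghost_ideal_def using c by (metis DiffI rangeI singletonD)
        then have "e_le (ee*(b x y)^2) (ee*(c*(q x * q y)))"
          using a c unfolding almost_CS_def nu_le_def e_less_def by blast
        then have "e_le ((lam*mu)^2*(ee*(b x y)^2)) ((lam*mu)^2*(ee*(c*(q x * q y))))" by (rule le_mono)
        moreover have "(lam*mu)^2*(ee*(c*(q x * q y))) = c*(A*B)" using AB by (simp add: algebra_simps)
        ultimately show ?thesis using GG2 by simp
      qed
      have h': "e_le (G*G) (c*(B*A))" if "ee*c = c" "c \<noteq> 0" "e_le ee c" "ee \<noteq> c" for c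
        using h[OF that] by (simp add: mult.commute)
      have S: "ee*(\<alpha>+\<beta>) = \<alpha>+\<beta>" using sA Aa Bb by simp
      from le_total[OF ST Bg Ag] have "e_le G (ee*(\<alpha>+\<beta>))"
      proof
        assume BA: "e_le B A"
        have "e_le G A" by (rule core_almost[OF ST SF Ag Bg Gg BA h nz GG])
        then show ?thesis using sA BA unfolding e_le_def by (simp add: add.commute)
      next
        assume BA: "e_le A B"
        have "e_le G B" by (rule core_almost[OF ST SF Bg Ag Gg BA h' nz GG])
        then show ?thesis using sA BA unfolding e_le_def by (simp add: add.commute)
      qed
      then have "(\<alpha> + \<beta>) + \<gamma> = \<alpha> + \<beta>" using final_sum[OF ST] S G_def by simp
      then show ?thesis using goal_eq by simp
    qed
  qed
qed

end
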